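(* Let $\mathcal{D}$ be a category with all pullbacks, and let $\mathcal{C}$ be a full subcategory of $\mathcal{D}$ that is equal to its essential image (closed under isomorphism), with the property that for any object $A$ of $\mathcal{C}$ and any object $B$ of $\mathcal{D}$, if $\mathrm{Hom}_{\mathcal{D}}(B,A)\neq\varnothing$ then $B$ is in $\mathcal{C}$. Let $\mathcal{D}'$ be the full subcategory of $\mathcal{D}$ on the objects not in $\mathcal{C}$. Then $\mathrm{Tw}(\mathcal{D}')$ has all pullbacks.
   Context: For a category $\mathcal{D}$, the Grothendieck twist $\mathrm{Tw}(\mathcal{D})$ is the category whose objects are finite families $\{a_i\}_{i\in I}$ ($I$ a finite set, each $a_i$ an object of $\mathcal{D}$), and whose morphisms $\{a_i\}_{i\in I}\to\{b_j\}_{j\in J}$ are pairs consisting of a function $f:I\to J$ and morphisms $F_i:a_i\to b_{f(i)}$ in $\mathcal{D}$ for all $i\in I$; composition composes set maps and components. *)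

theory Defs
  imports "HOL-Library.FuncSet"
begin

text \<open>Categories as explicit structures (object set, arrow set, domain, codomain,
identity, composition; Comp g f means g after f).\<close>

record ('o,'m) cat =
  Obj :: "'o set"
  Arr :: "'m set"
  Dom :: "'m \<Rightarrow> 'o"
  Cod :: "'m \<Rightarrow> 'o"
  Id  :: "'o \<Rightarrow> 'm"
  Comp :: "'m \<Rightarrow> 'm \<Rightarrow> 'm"

definition category :: "('o,'m) cat \<Rightarrow> bool" where
  "category C \<longleftrightarrow>
     (\<forall>f\<in>Arr C. Dom C f \<in> Obj C \<and> Cod C f \<in> Obj C) \<and>
     (\<forall>a\<in>Obj C. Id C a \<in> Arr C \<and> Dom C (Id C a) = a \<and> Cod C (Id C a) = a) \<and>
     (\<forall>f\<in>Arr C. \<forall>g\<in>Arr C. Cod C f = Dom C g \<longrightarrow>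
        Comp C g f \<in> Arr C \<and> Dom C (Comp C g f) = Dom C f \<and> Cod C (Comp C g f) = Cod C g) \<and>
     (\<forall>f\<in>Arr C. Comp C f (Id C (Dom C f)) = f \<and> Comp C (Id C (Cod C f)) f = f) \<and>
     (\<forall>f\<in>Arr C. \<forall>g\<in>Arr C. \<forall>h\<in>Arr C. Cod C f = Dom C g \<longrightarrow> Cod C g = Dom C h \<longrightarrow>
        Comp C h (Comp C g f) = Comp C (Comp C h g) f)"

definition hom :: "('o,'m) cat \<Rightarrow> 'o \<Rightarrow> 'o \<Rightarrow> 'm set" where
  "hom C a b = {f \<in> Arr C. Dom C f = a \<and> Cod C f = b}"

definition iso_arr :: "('o,'m) cat \<Rightarrow> 'm \<Rightarrow> bool" where
  "iso_arr C f \<longleftrightarrow> f \<in> Arr C \<and> (\<exists>g\<in>Arr C. Dom C g = Cod C f \<and> Cod C g = Dom C f \<and>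
      Comp C g f = Id C (Dom C f) \<and> Comp C f g = Id C (Cod C f))"

definition is_pullback :: "('o,'m) cat \<Rightarrow> 'm \<Rightarrow> 'm \<Rightarrow> 'm \<Rightarrow> 'm \<Rightarrow> bool" where
  "is_pullback C f g p q \<longleftrightarrow>
     f \<in> Arr C \<and> g \<in> Arr C \<and> p \<in> Arr C \<and> q \<in> Arr C \<and>
     Cod C f = Cod C g \<and> Dom C p = Dom C q \<and> Cod C p = Dom C f \<and> Cod C q = Dom C g \<and>
     Comp C f p = Comp C g q \<and>
     (\<forall>p'\<in>Arr C. \<forall>q'\<in>Arr C. Dom C p' = Dom C q' \<and> Cod C p' = Dom C f \<and> Cod C q' = Dom C g \<and>
        Comp C f p' = Comp C g q' \<longrightarrow>
        (\<exists>!u. u \<in> hom C (Dom C p') (Dom C p) \<and> Comp C p u = p' \<and> Comp C q u = q'))"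

definition has_pullbacks :: "('o,'m) cat \<Rightarrow> bool" where
  "has_pullbacks C \<longleftrightarrow>
     (\<forall>f\<in>Arr C. \<forall>g\<in>Arr C. Cod C f = Cod C g \<longrightarrow> (\<exists>p q. is_pullback C f g p q))"

definition full_sub :: "('o,'m) cat \<Rightarrow> 'o set \<Rightarrow> ('o,'m) cat" where
  "full_sub C S = C\<lparr>Obj := S, Arr := {f \<in> Arr C. Dom C f \<in> S \<and> Cod C f \<in> S}\<rparr>"

text \<open>An object is a finite family (I, a) with I a finite set of
indices (taken to be natural numbers) and a i an object for i in I (extensional).
A morphism is (source, target, f, F) with f : I \<rightarrow> J and F i : a i \<rightarrow> b (f i).\<close>

type_synonym 'o fam = "nat set \<times> (nat \<Rightarrow> 'o)"
type_synonym ('o,'m) twarr = "'o fam \<times> 'o fam \<times> (nat \<Rightarrow> nat) \<times> (nat \<Rightarrow> 'm)"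

definition tw_obj :: "('o,'m) cat \<Rightarrow> 'o fam set" where
  "tw_obj C = {(I, a). finite I \<and> a \<in> extensional I \<and> (\<forall>i\<in>I. a i \<in> Obj C)}"

definition tw_arr :: "('o,'m) cat \<Rightarrow> ('o,'m) twarr set" where
  "tw_arr C = {((I, a), (J, b), f, F). (I, a) \<in> tw_obj C \<and> (J, b) \<in> tw_obj C \<and>
      f \<in> I \<rightarrow>\<^sub>E J \<and> F \<in> extensional I \<and> (\<forall>i\<in>I. F i \<in> hom C (a i) (b (f i)))}"

definition Tw :: "('o,'m) cat \<Rightarrow> ('o fam, ('o,'m) twarr) cat" where
  "Tw C = \<lparr> Obj = tw_obj C,
            Arr = tw_arr C,
            Dom = (\<lambda>(X, Y, f, F). X),
            Cod = (\<lambda>(X, Y, f, F). Y),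
            Id = (\<lambda>(I, a). ((I, a), (I, a), (\<lambda>i\<in>I. i), (\<lambda>i\<in>I. Id C (a i)))),
            Comp = (\<lambda>(Y', Z, g, G) ((I, a), Y, f, F).
                      ((I, a), Z, (\<lambda>i\<in>I. g (f i)), (\<lambda>i\<in>I. Comp C (G (f i)) (F i)))) \<rparr>"

end

theory Submission
  imports Defs "HOL-Library.Nat_Bijection"
begin

lemma fs_simps[simp]:
  "Obj (full_sub D T) = T" "Arr (full_sub D T) = {f \<in> Arr D. Dom D f \<in> T \<and> Cod D f \<in> T}"
  "Dom (full_sub D T) = Dom D" "Cod (full_sub D T) = Cod D"
  "Id (full_sub D T) = Id D" "Comp (full_sub D T) = Comp D"
  by (simp_all add: full_sub_def)

lemma Tw_simps[simp]:
  "Obj (Tw C) = tw_obj C" "Arr (Tw C) = tw_arr C"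
  "Dom (Tw C) (X, Y, f, F) = X" "Cod (Tw C) (X, Y, f, F) = Y"
  "Comp (Tw C) (Y', Z, g, G) ((I, a), Y, f, F) =
     ((I, a), Z, (\<lambda>i\<in>I. g (f i)), (\<lambda>i\<in>I. Comp C (G (f i)) (F i)))"
  by (simp_all add: Tw_def)

lemma homC: "h \<in> hom (full_sub D T) x y \<longleftrightarrow> h \<in> hom D x y \<and> x \<in> T \<and> y \<in> T"
  by (auto simp: hom_def)

lemma tw_arr_mem: "((I, a), (J, b), f, F) \<in> tw_arr C \<longleftrightarrow>
   (I, a) \<in> tw_obj C \<and> (J, b) \<in> tw_obj C \<and> f \<in> I \<rightarrow>\<^sub>E J \<and> F \<in> extensional I \<and>
   (\<forall>i\<in>I. F i \<in> hom C (a i) (b (f i)))"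
  by (simp add: tw_arr_def)

lemma restrict_eqI: "F \<in> extensional L \<Longrightarrow> (\<And>l. l \<in> L \<Longrightarrow> G l = F l) \<Longrightarrow> restrict G L = F"
  by (auto simp: restrict_def extensional_def)

lemma tw_pb:
  fixes D :: "('o,'m) cat" and S :: "'o set"
  assumes cat: "category D" and hpb: "has_pullbacks D"
    and down: "\<forall>A\<in>S. \<forall>B\<in>Obj D. hom D B A \<noteq> {} \<longrightarrow> B \<in> S"
    and fA: "((I, a), (K, c), \<phi>, \<Phi>) \<in> tw_arr (full_sub D (Obj D - S))"
    and gA: "((J, b), (K, c), \<psi>, \<Psi>) \<in> tw_arr (full_sub D (Obj D - S))"
  shows "\<exists>p q. is_pullback (Tw (full_sub D (Obj D - S))) ((I, a), (K, c), \<phi>, \<Phi>) ((J, b), (K, c), \<psi>, \<Psi>) p q"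
proof -
  define C where "C = full_sub D (Obj D - S)"
  define f where "f = ((I, a), (K, c), \<phi>, \<Phi>)"
  define g where "g = ((J, b), (K, c), \<psi>, \<Psi>)"
  have fA': "f \<in> tw_arr C" and gA': "g \<in> tw_arr C" using fA gA by (simp_all add: C_def f_def g_def)
  have fI: "finite I" "a \<in> extensional I" "\<forall>i\<in>I. a i \<in> Obj D - S" and fJ: "finite J" "b \<in> extensional J" "\<forall>j\<in>J. b j \<in> Obj D - S"
    and fK: "finite K" "c \<in> extensional K" "\<forall>k\<in>K. c k \<in> Obj D - S"
    and \<phi>E: "\<phi> \<in> I \<rightarrow>\<^sub>E K" and \<Phi>E: "\<Phi> \<in> extensional I" and \<Phi>h: "\<forall>i\<in>I. \<Phi> i \<in> hom D (a i) (c (\<phi> i))"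
    and \<psi>E: "\<psi> \<in> J \<rightarrow>\<^sub>E K" and \<Psi>E: "\<Psi> \<in> extensional J" and \<Psi>h: "\<forall>j\<in>J. \<Psi> j \<in> hom D (b j) (c (\<psi> j))"
    using fA gA by (auto simp: tw_arr_mem tw_obj_def homC)
  define pbf where "pbf i j = (SOME pq. is_pullback D (\<Phi> i) (\<Psi> j) (fst pq) (snd pq))" for i j
  define pp where "pp i j = fst (pbf i j)" for i j
  define qq where "qq i j = snd (pbf i j)" for i j
  have pbf: "is_pullback D (\<Phi> i) (\<Psi> j) (pp i j) (qq i j)" if "i \<in> I" "j \<in> J" "\<phi> i = \<psi> j" for i j
  proof -
    have "\<Phi> i \<in> Arr D" "\<Psi> j \<in> Arr D" "Cod D (\<Phi> i) = Cod D (\<Psi> j)"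
      using \<Phi>h \<Psi>h that by (auto simp: hom_def)
    then obtain p q where "is_pullback D (\<Phi> i) (\<Psi> j) p q" using hpb unfolding has_pullbacks_def by blast
    then have "is_pullback D (\<Phi> i) (\<Psi> j) (fst (p,q)) (snd (p,q))" by simp
    then show ?thesis unfolding pp_def qq_def pbf_def by (rule someI)
  qed
  define fi where "fi n = fst (prod_decode n)" for n
  define sj where "sj n = snd (prod_decode n)" for n
  define P where "P = {n. fi n \<in> I \<and> sj n \<in> J \<and> \<phi> (fi n) = \<psi> (sj n) \<and> Dom D (pp (fi n) (sj n)) \<notin> S}"
  have Penc: "prod_encode (i, j) \<in> P \<longleftrightarrow> i \<in> I \<and> j \<in> J \<and> \<phi> i = \<psi> j \<and> Dom D (pp i j) \<notin> S" for i j
    by (simp add: P_def fi_def sj_def prod_encode_inverse)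
  have Psub: "P \<subseteq> prod_encode ` (I \<times> J)"
  proof
    fix n assume "n \<in> P"
    then have "prod_decode n \<in> I \<times> J" by (auto simp: P_def fi_def sj_def mem_Times_iff)
    then show "n \<in> prod_encode ` (I \<times> J)" by (metis image_eqI prod_decode_inverse)
  qed
  have Pfin: "finite P" using Psub fI(1) fJ(1) by (meson finite_SigmaI finite_imageI finite_subset)
  define e where "e = (\<lambda>n\<in>P. Dom D (pp (fi n) (sj n)))"
  define p where "p = ((P, e), (I, a), (\<lambda>n\<in>P. fi n), (\<lambda>n\<in>P. pp (fi n) (sj n)))"
  define q where "q = ((P, e), (J, b), (\<lambda>n\<in>P. sj n), (\<lambda>n\<in>P. qq (fi n) (sj n)))"
  have catD: "\<And>h. h \<in> Arr D \<Longrightarrow> Dom D h \<in> Obj D \<and> Cod D h \<in> Obj D" using cat by (simp add: category_def)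
  have Pinfo: "fi n \<in> I \<and> sj n \<in> J \<and> \<phi> (fi n) = \<psi> (sj n) \<and> Dom D (pp (fi n) (sj n)) \<notin> S \<and>
      is_pullback D (\<Phi> (fi n)) (\<Psi> (sj n)) (pp (fi n) (sj n)) (qq (fi n) (sj n))" if "n \<in> P" for n
    using that pbf by (auto simp: P_def)
  have ppP: "pp (fi n) (sj n) \<in> hom D (e n) (a (fi n)) \<and> qq (fi n) (sj n) \<in> hom D (e n) (b (sj n))
       \<and> e n \<in> Obj D - S \<and> Comp D (\<Phi> (fi n)) (pp (fi n) (sj n)) = Comp D (\<Psi> (sj n)) (qq (fi n) (sj n))" if "n \<in> P" for n
  proof -
    note pi = Pinfo[OF that]
    then have pb: "is_pullback D (\<Phi> (fi n)) (\<Psi> (sj n)) (pp (fi n) (sj n)) (qq (fi n) (sj n))" by blast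
    have "Dom D (\<Phi> (fi n)) = a (fi n)" "Dom D (\<Psi> (sj n)) = b (sj n)" using \<Phi>h \<Psi>h pi by (auto simp: hom_def)
    with pb pi that catD[of "pp (fi n) (sj n)"] show ?thesis by (auto simp: is_pullback_def hom_def e_def)
  qed
  have objP: "(P, e) \<in> tw_obj C"
    using Pfin ppP by (auto simp: tw_obj_def C_def e_def)
  have objI: "(I, a) \<in> tw_obj C" and objJ: "(J, b) \<in> tw_obj C" and objK: "(K, c) \<in> tw_obj C"
    using fI fJ fK by (auto simp: tw_obj_def C_def)
  have pA: "p \<in> tw_arr C" unfolding p_def tw_arr_mem
    using objP objI ppP Pinfo fI by (auto simp: C_def homC)
  have qA: "q \<in> tw_arr C" unfolding q_def tw_arr_mem
    using objP objJ ppP Pinfo fJ by (auto simp: C_def homC)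
  have comm: "Comp (Tw C) f p = Comp (Tw C) g q"
    using Pinfo ppP by (auto simp: f_def g_def p_def q_def C_def intro!: restrict_ext)
  have univ: "\<exists>!u. u \<in> hom (Tw C) (Dom (Tw C) p') (Dom (Tw C) p) \<and> Comp (Tw C) p u = p' \<and> Comp (Tw C) q u = q'"
    if p'A: "p' \<in> Arr (Tw C)" and q'A: "q' \<in> Arr (Tw C)"
      and cond: "Dom (Tw C) p' = Dom (Tw C) q' \<and> Cod (Tw C) p' = Dom (Tw C) f \<and> Cod (Tw C) q' = Dom (Tw C) g \<and>
        Comp (Tw C) f p' = Comp (Tw C) g q'" for p' q'
  proof -
    obtain L e' Y1 \<alpha> A where p'e: "p' = ((L, e'), Y1, \<alpha>, A)" by (metis prod.exhaust)
    obtain L2 e2 Y2 \<beta> B where q'e: "q' = ((L2, e2), Y2, \<beta>, B)" by (metis prod.exhaust)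
    from cond have eqs: "L2 = L" "e2 = e'" "Y1 = (I, a)" "Y2 = (J, b)" by (auto simp: p'e q'e f_def g_def)
    have p'e2: "p' = ((L, e'), (I, a), \<alpha>, A)" and q'e2: "q' = ((L, e'), (J, b), \<beta>, B)"
      using p'e q'e eqs by auto
    have objL: "(L, e') \<in> tw_obj C" and \<alpha>E: "\<alpha> \<in> L \<rightarrow>\<^sub>E I" and AE: "A \<in> extensional L"
      and Ah: "\<forall>l\<in>L. A l \<in> hom D (e' l) (a (\<alpha> l))"
      and \<beta>E: "\<beta> \<in> L \<rightarrow>\<^sub>E J" and BE: "B \<in> extensional L"
      and Bh: "\<forall>l\<in>L. B l \<in> hom D (e' l) (b (\<beta> l))"
      and eL: "\<forall>l\<in>L. e' l \<in> Obj D - S"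
      using p'A q'A unfolding p'e2 q'e2 by (auto simp: tw_arr_mem C_def homC tw_obj_def)
    from cond have ceq: "(\<lambda>l\<in>L. \<phi> (\<alpha> l)) = (\<lambda>l\<in>L. \<psi> (\<beta> l))"
       "(\<lambda>l\<in>L. Comp D (\<Phi> (\<alpha> l)) (A l)) = (\<lambda>l\<in>L. Comp D (\<Psi> (\<beta> l)) (B l))"
      by (auto simp: p'e2 q'e2 f_def g_def C_def)
    have ceq1: "\<phi> (\<alpha> l) = \<psi> (\<beta> l)" and ceq2: "Comp D (\<Phi> (\<alpha> l)) (A l) = Comp D (\<Psi> (\<beta> l)) (B l)"
      if "l \<in> L" for l
      using fun_cong[OF ceq(1), of l] fun_cong[OF ceq(2), of l] that by auto
    have med: "\<exists>!h. h \<in> hom D (e' l) (Dom D (pp (\<alpha> l) (\<beta> l))) \<and> Comp D (pp (\<alpha> l) (\<beta> l)) h = A l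
                 \<and> Comp D (qq (\<alpha> l) (\<beta> l)) h = B l" if l: "l \<in> L" for l
    proof -
      have il: "\<alpha> l \<in> I" "\<beta> l \<in> J" using \<alpha>E \<beta>E l by auto
      have pb: "is_pullback D (\<Phi> (\<alpha> l)) (\<Psi> (\<beta> l)) (pp (\<alpha> l) (\<beta> l)) (qq (\<alpha> l) (\<beta> l))"
        using pbf il ceq1 l by blast
      have "Dom D (\<Phi> (\<alpha> l)) = a (\<alpha> l)" "Dom D (\<Psi> (\<beta> l)) = b (\<beta> l)" using \<Phi>h \<Psi>h il by (auto simp: hom_def)
      with pb Ah Bh l ceq2 show ?thesis unfolding is_pullback_def hom_def
        by (smt (verit, best) mem_Collect_eq)
    qed
    define H where "H l = (THE h. h \<in> hom D (e' l) (Dom D (pp (\<alpha> l) (\<beta> l))) \<and> Comp D (pp (\<alpha> l) (\<beta> l)) h = A l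
                 \<and> Comp D (qq (\<alpha> l) (\<beta> l)) h = B l)" for l
    have H: "H l \<in> hom D (e' l) (Dom D (pp (\<alpha> l) (\<beta> l))) \<and> Comp D (pp (\<alpha> l) (\<beta> l)) (H l) = A l
                 \<and> Comp D (qq (\<alpha> l) (\<beta> l)) (H l) = B l" if "l \<in> L" for l
      unfolding H_def using theI'[OF med[OF that]] .
    have inP: "prod_encode (\<alpha> l, \<beta> l) \<in> P" if l: "l \<in> L" for l
    proof -
      have "Dom D (pp (\<alpha> l) (\<beta> l)) \<notin> S"
      proof
        assume "Dom D (pp (\<alpha> l) (\<beta> l)) \<in> S"
        moreover have "hom D (e' l) (Dom D (pp (\<alpha> l) (\<beta> l))) \<noteq> {}" using H[OF l] by blast
        ultimately show False using down eL l by blast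
      qed
      then show ?thesis using Penc \<alpha>E \<beta>E ceq1 l by auto
    qed
    have einP: "e (prod_encode (\<alpha> l, \<beta> l)) = Dom D (pp (\<alpha> l) (\<beta> l))" if "l \<in> L" for l
      using inP[OF that] by (simp add: e_def fi_def sj_def prod_encode_inverse)
    have eObj: "Dom D (pp (\<alpha> l) (\<beta> l)) \<in> Obj D - S" if "l \<in> L" for l
      using ppP[OF inP[OF that]] einP[OF that] by simp
    define u where "u = ((L, e'), (P, e), (\<lambda>l\<in>L. prod_encode (\<alpha> l, \<beta> l)), (\<lambda>l\<in>L. H l))"
    have uA: "u \<in> tw_arr C" unfolding u_def tw_arr_mem
      using objL objP inP H einP eL eObj by (auto simp: C_def homC)
    have uh: "u \<in> hom (Tw C) (Dom (Tw C) p') (Dom (Tw C) p)"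
      using uA by (simp add: hom_def u_def p'e2 p_def)
    have pu: "Comp (Tw C) p u = p'"
      using inP H \<alpha>E AE
      by (auto simp: u_def p_def p'e2 C_def fi_def sj_def prod_encode_inverse PiE_iff intro!: restrict_eqI)
    have qu: "Comp (Tw C) q u = q'"
      using inP H \<beta>E BE
      by (auto simp: u_def q_def q'e2 C_def fi_def sj_def prod_encode_inverse PiE_iff intro!: restrict_eqI)
    show ?thesis
    proof (rule ex1I[of _ u])
      show "u \<in> hom (Tw C) (Dom (Tw C) p') (Dom (Tw C) p) \<and> Comp (Tw C) p u = p' \<and> Comp (Tw C) q u = q'"
        using uh pu qu by blast
    next
      fix u' assume u': "u' \<in> hom (Tw C) (Dom (Tw C) p') (Dom (Tw C) p) \<and> Comp (Tw C) p u' = p' \<and> Comp (Tw C) q u' = q'"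
      obtain X Y \<gamma> \<Gamma> where u'e: "u' = (X, Y, \<gamma>, \<Gamma>)" by (metis prod.exhaust)
      have XY: "X = (L, e')" "Y = (P, e)" using u' by (auto simp: hom_def u'e p'e2 p_def)
      have u'A: "((L, e'), (P, e), \<gamma>, \<Gamma>) \<in> tw_arr C" using u' unfolding XY u'e hom_def by auto
      then have \<gamma>E: "\<gamma> \<in> L \<rightarrow>\<^sub>E P" and \<Gamma>E: "\<Gamma> \<in> extensional L" and \<Gamma>h: "\<forall>l\<in>L. \<Gamma> l \<in> hom D (e' l) (e (\<gamma> l))"
        by (auto simp: tw_arr_mem C_def homC)
      from u' have c1: "(\<lambda>l\<in>L. (\<lambda>n\<in>P. fi n) (\<gamma> l)) = \<alpha>"
          "(\<lambda>l\<in>L. Comp D ((\<lambda>n\<in>P. pp (fi n) (sj n)) (\<gamma> l)) (\<Gamma> l)) = A"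
        and c2: "(\<lambda>l\<in>L. (\<lambda>n\<in>P. sj n) (\<gamma> l)) = \<beta>"
          "(\<lambda>l\<in>L. Comp D ((\<lambda>n\<in>P. qq (fi n) (sj n)) (\<gamma> l)) (\<Gamma> l)) = B"
        by (auto simp: u'e XY p_def q_def p'e2 q'e2 C_def)
      have ptw: "\<gamma> l = prod_encode (\<alpha> l, \<beta> l) \<and> \<Gamma> l = H l" if l: "l \<in> L" for l
      proof -
        have gP: "\<gamma> l \<in> P" using \<gamma>E l by auto
        have "fi (\<gamma> l) = \<alpha> l" "sj (\<gamma> l) = \<beta> l"
          using fun_cong[OF c1(1), of l] fun_cong[OF c2(1), of l] l gP by auto
        then have g: "\<gamma> l = prod_encode (\<alpha> l, \<beta> l)"
          by (metis fi_def sj_def prod.collapse prod_decode_inverse)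
        have "Comp D (pp (\<alpha> l) (\<beta> l)) (\<Gamma> l) = A l" "Comp D (qq (\<alpha> l) (\<beta> l)) (\<Gamma> l) = B l"
          using fun_cong[OF c1(2), of l] fun_cong[OF c2(2), of l] l gP g
          by (auto simp: fi_def sj_def prod_encode_inverse)
        moreover have "\<Gamma> l \<in> hom D (e' l) (Dom D (pp (\<alpha> l) (\<beta> l)))"
          using \<Gamma>h l g einP by auto
        ultimately have "\<Gamma> l = H l" using med[OF l] H[OF l] by blast
        with g show ?thesis by simp
      qed
      have "\<gamma> = (\<lambda>l\<in>L. prod_encode (\<alpha> l, \<beta> l))"
        by (rule restrict_eqI[symmetric]) (use \<gamma>E ptw in \<open>auto simp: PiE_iff\<close>)
      moreover have "\<Gamma> = (\<lambda>l\<in>L. H l)"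
        by (rule restrict_eqI[symmetric]) (use \<Gamma>E ptw in auto)
      ultimately show "u' = u" by (simp add: u'e XY u_def)
    qed
  qed

  have "is_pullback (Tw C) f g p q"
    unfolding is_pullback_def
    using fA' gA' pA qA comm univ by (simp add: f_def g_def p_def q_def)
  then show ?thesis unfolding C_def f_def g_def by blast
qed


theorem mainTheorem4:
  fixes D :: "('o,'m) cat" and S :: "'o set"
  assumes "category D"
    and "has_pullbacks D"
    and "S \<subseteq> Obj D"
    and "\<forall>f. iso_arr D f \<and> Cod D f \<in> S \<longrightarrow> Dom D f \<in> S"
    and "\<forall>A\<in>S. \<forall>B\<in>Obj D. hom D B A \<noteq> {} \<longrightarrow> B \<in> S"
  shows "has_pullbacks (Tw (full_sub D (Obj D - S)))"
  unfolding has_pullbacks_def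
proof (intro ballI impI)
  fix f g assume f: "f \<in> Arr (Tw (full_sub D (Obj D - S)))" and g: "g \<in> Arr (Tw (full_sub D (Obj D - S)))"
    and cc: "Cod (Tw (full_sub D (Obj D - S))) f = Cod (Tw (full_sub D (Obj D - S))) g"
  obtain I a K c \<phi> \<Phi> where fe: "f = ((I, a), (K, c), \<phi>, \<Phi>)" by (metis prod.exhaust)
  obtain J b K' c' \<psi> \<Psi> where ge: "g = ((J, b), (K', c'), \<psi>, \<Psi>)" by (metis prod.exhaust)
  from cc have "K' = K" "c' = c" by (auto simp: fe ge)
  then show "\<exists>p q. is_pullback (Tw (full_sub D (Obj D - S))) f g p q"
    using tw_pb[OF assms(1,2,5)] f g fe ge by auto
qed

end
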